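(* Let $n\ge1$ and let $\alpha=(a_n,\ldots,a_1)$ be a restricted sequence. In the expansion of $e'_\alpha$ as a $\mathbb{Q}(q)$-linear combination of the basis $\{e_\beta\}$ of $V_n$, the coefficient of $e_\alpha$ equals $1$.
   Context: $D_n$: non-crossing perfect matchings of $\{1,\ldots,2n\}$ (non-crossing $n$-chord diagrams), $D_0=\{\phi\}$. For $1\le k\le 2n+1$, $l_k:D_n\to D_{n+1}$: $l_k(\alpha)$ matches $k$ with $k+1$, old point $i$ becomes $i$ if $i<k$ and $i+2$ if $i\ge k$. Restricted sequence of $\alpha\in D_n$: let $k_n$ be the smallest $k$ with $k$ matched to $k+1$; it is $(k_n,k_{n-1},\ldots,k_1)$ with $(k_{n-1},\ldots,k_1)$ the restricted sequence of $\alpha$ with that arc removed (empty for $\phi$). This is a bijection from $D_n$ to restricted sequences of length $n$; $e_{(a_n,\ldots,a_1)}$ denotes the corresponding diagram. $V_n$: $\mathbb{Q}(q)$-vector space with basis $D_n$ ($q$ an indeterminate), $l_k$ extended linearly. $\Delta_{-1}=0$, $\Delta_0=1$, $\Delta_k=q\Delta_{k-1}-\Delta_{k-2}$. $e'$: $e'_{(1)}=e_{(1)}$; for $n\ge2$, $e'_{(a_n,\ldots,a_1)}=l_{a_n}(e'_{(a_{n-1},\ldots,a_1)})-\frac{\Delta_{a_n-2}}{\Delta_{a_n-1}}e'_{(a_n-1,a_{n-1},\ldots,a_1)}$ if $a_n\ge2$, and $e'_{(1,a_{n-1},\ldots,a_1)}=l_1(e'_{(a_{n-1},\ldots,a_1)})$.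 *)

theory Defs
  imports Main "HOL-Computational_Algebra.Polynomial" "HOL-Computational_Algebra.Fraction_Field"
begin

text \<open>A chord diagram on points 1..2n is an involution m on nat, fixed-point-free on
  {1..2n} and the identity outside {1..2n}.\<close>

definition D :: "nat \<Rightarrow> (nat \<Rightarrow> nat) set" where
  "D n = {m. (\<forall>x. x \<notin> {1..2*n} \<longrightarrow> m x = x)
           \<and> (\<forall>x\<in>{1..2*n}. m x \<in> {1..2*n} \<and> m x \<noteq> x \<and> m (m x) = x)
           \<and> (\<forall>a b c d. a < b \<and> b < c \<and> c < d \<and> m a = c \<and> m b = d \<longrightarrow> False)}"

definition shift :: "nat \<Rightarrow> nat \<Rightarrow> nat" where
  "shift k i = (if i < k then i else i + 2)"

definition l :: "nat \<Rightarrow> (nat \<Rightarrow> nat) \<Rightarrow> (nat \<Rightarrow> nat)" where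
  "l k m = (\<lambda>x. if x = k then k + 1 else if x = k + 1 then k
               else if x < k then shift k (m x) else shift k (m (x - 2)))"

definition unshift :: "nat \<Rightarrow> nat \<Rightarrow> nat" where
  "unshift k j = (if j < k then j else j - 2)"

definition remove_arc :: "nat \<Rightarrow> (nat \<Rightarrow> nat) \<Rightarrow> (nat \<Rightarrow> nat)" where
  "remove_arc k m = (\<lambda>x. if x < k then unshift k (m x) else unshift k (m (x + 2)))"

text \<open>Restricted sequence (a_n, ..., a_1) as the list [a_n, ..., a_1].\<close>
fun rseq :: "nat \<Rightarrow> (nat \<Rightarrow> nat) \<Rightarrow> nat list" where
  "rseq 0 m = []"
| "rseq (Suc n) m = (let k = (LEAST k. 1 \<le> k \<and> m k = k + 1) in k # rseq n (remove_arc k m))"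

definition restricted :: "nat \<Rightarrow> nat list \<Rightarrow> bool" where
  "restricted n s \<longleftrightarrow> (\<exists>\<alpha>\<in>D n. rseq n \<alpha> = s)"

definition diag :: "nat list \<Rightarrow> (nat \<Rightarrow> nat)" where
  "diag s = (THE \<alpha>. \<alpha> \<in> D (length s) \<and> rseq (length s) \<alpha> = s)"

text \<open>Q(q) and vectors of V_n as coefficient functions on diagrams.\<close>
type_synonym Qq = "rat poly fract"
type_synonym vec = "(nat \<Rightarrow> nat) \<Rightarrow> Qq"

definition qvar :: Qq where "qvar = Fract [:0, 1:] 1"

definition ev :: "nat list \<Rightarrow> vec" where
  "ev s = (\<lambda>\<gamma>. if \<gamma> = diag s then 1 else 0)"

text \<open>Linear extension of l_k : V_n \<rightarrow> V_{n+1}.\<close>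
definition L :: "nat \<Rightarrow> nat \<Rightarrow> vec \<Rightarrow> vec" where
  "L n k v = (\<lambda>\<gamma>. \<Sum>\<beta>\<in>{\<beta> \<in> D n. l k \<beta> = \<gamma>}. v \<beta>)"

text \<open>Delta_k for k \<ge> 0 (Delta_{-1} = 0 gives Delta_1 = q).\<close>
fun Delta :: "nat \<Rightarrow> Qq" where
  "Delta 0 = 1"
| "Delta (Suc 0) = qvar"
| "Delta (Suc (Suc k)) = qvar * Delta (Suc k) - Delta k"

text \<open>eprime a rest = e'_{(a, rest)}, an element of V_{length rest + 1}.\<close>
fun eprime :: "nat \<Rightarrow> nat list \<Rightarrow> vec" where
  "eprime a [] = ev [a]"
| "eprime a (b # rest) =
     (if 2 \<le> a then
        (\<lambda>\<gamma>. L (Suc (length rest)) a (eprime b rest) \<gamma>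
              - (Delta (a - 2) / Delta (a - 1)) * eprime (a - 1) (b # rest) \<gamma>)
      else L (Suc (length rest)) 1 (eprime b rest))"

end

theory Submission
  imports Defs
begin

lemma D_inv: "m \<in> D N \<Longrightarrow> m (m x) = x"
  unfolding D_def by (cases "x \<in> {1..2*N}") auto

lemma D_fix: "m \<in> D N \<Longrightarrow> (m x = x) \<longleftrightarrow> x \<notin> {1..2*N}"
  unfolding D_def by auto

lemma D_range: "m \<in> D N \<Longrightarrow> x \<in> {1..2*N} \<Longrightarrow> m x \<in> {1..2*N}"
  unfolding D_def by auto

lemma D_nc: "m \<in> D N \<Longrightarrow> a < b \<Longrightarrow> b < c \<Longrightarrow> c < d \<Longrightarrow> m a = c \<Longrightarrow> m b = d \<Longrightarrow> False"
  unfolding D_def by blast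

lemma remove_l: "remove_arc k (l k m) = m"
  unfolding remove_arc_def l_def shift_def unshift_def by (rule ext) auto

lemma l_inj: "l k \<beta> = l k \<delta> \<Longrightarrow> \<beta> = \<delta>"
  by (metis remove_l)

lemma l_remove:
  assumes m: "m \<in> D N" and k: "m k = k + 1"
  shows "l k (remove_arc k m) = m"
proof (rule ext)
  fix x
  have mk1: "m (k+1) = k" using D_inv[OF m, of k] k by simp
  have nk: "m x \<noteq> k" if "x \<noteq> k+1" for x using D_inv[OF m, of x] k that by auto
  have nk1: "m x \<noteq> k+1" if "x \<noteq> k" for x using D_inv[OF m, of x] mk1 that by auto
  show "l k (remove_arc k m) x = m x"
  proof (cases "x = k \<or> x = k+1")
    case True then show ?thesis using k mk1 unfolding l_def by auto
  next
    case False
    then have "m x \<noteq> k" "m x \<noteq> k+1" using nk nk1 by auto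
    show ?thesis
    proof (cases "x < k")
      case True
      then show ?thesis using \<open>m x \<noteq> k\<close> \<open>m x \<noteq> k+1\<close>
        unfolding l_def remove_arc_def shift_def unshift_def by auto
    next
      case xk: False
      then have x2: "x - 2 + 2 = x" "\<not> x - 2 < k" using False by auto
      have "l k (remove_arc k m) x = shift k (unshift k (m x))"
        using False xk x2 unfolding l_def remove_arc_def by simp
      then show ?thesis using \<open>m x \<noteq> k\<close> \<open>m x \<noteq> k+1\<close>
        unfolding shift_def unshift_def by auto
    qed
  qed
qed

lemma short_arc_exists:
  assumes m: "m \<in> D (Suc n)"
  shows "\<exists>k. 1 \<le> k \<and> m k = k + 1"
proof -
  define N where "N = Suc n"
  have mN: "m \<in> D N" using m N_def by simp
  let ?P = "\<lambda>i. 1 \<le> i \<and> i \<le> 2*N \<and> i < m i"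
  have "m 1 \<noteq> 1" using D_fix[OF mN, of 1] N_def by simp
  moreover have "m 1 \<in> {1..2*N}" using D_range[OF mN, of 1] N_def by simp
  ultimately have "?P 1" using N_def by auto
  then obtain i where Pi: "?P i" and mi: "\<forall>y. ?P y \<longrightarrow> m i - i \<le> m y - y"
    using ex_has_least_nat[of ?P 1 "\<lambda>i. m i - i"] by blast
  have "m i = i + 1"
  proof (rule ccontr)
    assume ne: "m i \<noteq> i + 1"
    define j where "j = i + 1"
    have ij: "j < m i" using ne Pi j_def by simp
    have mirange: "m i \<in> {1..2*N}" using D_range[OF mN, of i] Pi by simp
    have jr: "j \<in> {1..2*N}" using ij mirange j_def by simp
    have mjj: "m j \<noteq> j" using D_fix[OF mN, of j] jr by simp
    have mmj: "m (m j) = j" using D_inv[OF mN] by simp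
    have mmi: "m (m i) = i" using D_inv[OF mN] by simp
    have mjr: "m j \<in> {1..2*N}" using D_range[OF mN] jr by simp
    consider "m j < i" | "m j = i" | "j < m j \<and> m j < m i" | "m j = m i" | "m i < m j"
      using mjj j_def by linarith
    then show False
    proof cases
      case 1 then show ?thesis using D_nc[OF mN, of "m j" i j "m i"] mmj ij j_def by simp
    next
      case 2 then show ?thesis using mmj mmi ij j_def by simp
    next
      case 3
      then have "?P j" using jr by simp
      then have "m i - i \<le> m j - j" using mi by blast
      then show ?thesis using 3 j_def by arith
    next
      case 4
      then have "j = i" using mmj mmi by metis
      then show ?thesis using j_def by simp
    next
      case 5 then show ?thesis using D_nc[OF mN, of i j "m i" "m j"] ij j_def by simp
    qed
  qed
  then show ?thesis using Pi by blast
qed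

lemma remove_arc_D:
  assumes m: "m \<in> D (Suc n)" and k1: "1 \<le> k" and k: "m k = k + 1"
  shows "remove_arc k m \<in> D n"
proof -
  let ?r = "remove_arc k m"
  have mk1: "m (k+1) = k" using D_inv[OF m, of k] k by simp
  have krange: "k \<in> {1..2*Suc n}" using D_fix[OF m, of k] k by auto
  have k1range: "k+1 \<le> 2*Suc n" using D_range[OF m krange] k by simp
  have nk: "m x \<noteq> k" if "x \<noteq> k+1" for x using D_inv[OF m, of x] k that by auto
  have nk1: "m x \<noteq> k+1" if "x \<noteq> k" for x using D_inv[OF m, of x] mk1 that by auto
  have r_eq: "?r x = unshift k (m (shift k x))" for x
    unfolding remove_arc_def shift_def by auto
  have sh_ne: "shift k x \<noteq> k" "shift k x \<noteq> k+1" for x unfolding shift_def by auto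
  have shun: "shift k (unshift k z) = z" if "z \<noteq> k" "z \<noteq> k+1" for z
    using that unfolding shift_def unshift_def by auto
  have unsh: "unshift k (shift k z) = z" for z unfolding shift_def unshift_def by auto
  have msh: "m (shift k x) = shift k (?r x)" for x
    using r_eq shun nk nk1 sh_ne by metis
  have shmono: "shift k a < shift k b \<longleftrightarrow> a < b" for a b unfolding shift_def by auto
  have sh_range: "shift k x \<in> {1..2*Suc n} \<longleftrightarrow> x \<in> {1..2*n}" for x
    using k1 k1range unfolding shift_def by auto
  have rinv: "?r (?r x) = x" for x
    using msh D_inv[OF m] unsh by metis
  have rfix: "?r x = x \<longleftrightarrow> x \<notin> {1..2*n}" for x
  proof -
    have "?r x = x \<longleftrightarrow> m (shift k x) = shift k x" using msh unsh by metis
    then show ?thesis using D_fix[OF m] sh_range by blast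
  qed
  have rrange: "?r x \<in> {1..2*n}" if "x \<in> {1..2*n}" for x
    using that D_range[OF m, of "shift k x"] msh sh_range by metis
  have nc: False if "a < b" "b < c" "c < d" "?r a = c" "?r b = d" for a b c d
    using D_nc[OF m, of "shift k a" "shift k b" "shift k c" "shift k d"] that msh shmono by metis
  have nc': "\<forall>a b c d. a < b \<and> b < c \<and> c < d \<and> ?r a = c \<and> ?r b = d \<longrightarrow> False"
    using nc by blast
  have p1: "\<forall>x. x \<notin> {1..2*n} \<longrightarrow> ?r x = x" using rfix by blast
  have p2: "\<forall>x\<in>{1..2*n}. ?r x \<in> {1..2*n} \<and> ?r x \<noteq> x \<and> ?r (?r x) = x"
    using rfix rrange rinv by blast
  show ?thesis unfolding D_def mem_Collect_eq using p1 p2 nc' by (intro conjI)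
qed

lemma rseq_inj: "m \<in> D n \<Longrightarrow> m' \<in> D n \<Longrightarrow> rseq n m = rseq n m' \<Longrightarrow> m = m'"
proof (induction n arbitrary: m m')
  case 0
  then show ?case unfolding D_def by auto
next
  case (Suc n)
  define k where "k = (LEAST k. 1 \<le> k \<and> m k = k + 1)"
  define k' where "k' = (LEAST k. 1 \<le> k \<and> m' k = k + 1)"
  have r1: "rseq (Suc n) m = k # rseq n (remove_arc k m)" by (simp add: k_def Let_def)
  have r2: "rseq (Suc n) m' = k' # rseq n (remove_arc k' m')" by (simp add: k'_def Let_def)
  have eq: "k = k'" "rseq n (remove_arc k m) = rseq n (remove_arc k' m')"
    using Suc.prems(3) r1 r2 by (metis list.inject)+
  have hk: "1 \<le> k \<and> m k = k + 1" unfolding k_def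
    using short_arc_exists[OF Suc.prems(1)] by (rule LeastI_ex)
  have hk': "1 \<le> k' \<and> m' k' = k' + 1" unfolding k'_def
    using short_arc_exists[OF Suc.prems(2)] by (rule LeastI_ex)
  have "remove_arc k m = remove_arc k m'"
    using Suc.IH[OF remove_arc_D[OF Suc.prems(1)] remove_arc_D[OF Suc.prems(2)]] hk hk' eq by simp
  then show ?case using l_remove[OF Suc.prems(1)] l_remove[OF Suc.prems(2)] hk hk' eq by metis
qed

lemma diag_eq:
  assumes "restricted n s"
  shows "diag s \<in> D n \<and> rseq n (diag s) = s"
proof -
  obtain \<alpha> where a: "\<alpha> \<in> D n" "rseq n \<alpha> = s" using assms unfolding restricted_def by blast
  have len: "length (rseq n m) = n" for m by (induction n arbitrary: m) (auto simp: Let_def)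
  have ls: "length s = n" using a len by metis
  have "diag s = \<alpha>" unfolding diag_def ls
    by (rule the_equality) (use a rseq_inj in auto)
  then show ?thesis using a by simp
qed

lemma L_l:
  assumes "\<delta> \<in> D n"
  shows "L n k v (l k \<delta>) = v \<delta>"
proof -
  have "{\<beta> \<in> D n. l k \<beta> = l k \<delta>} = {\<delta>}" using assms l_inj by auto
  then show ?thesis unfolding L_def by simp
qed

declare eprime.simps(2)[simp del]

lemma eprime_ge2: "2 \<le> a \<Longrightarrow> eprime a (b # rest) \<gamma> =
   L (Suc (length rest)) a (eprime b rest) \<gamma> - (Delta (a - 2) / Delta (a - 1)) * eprime (a - 1) (b # rest) \<gamma>"
  by (subst eprime.simps(2)) simp

lemma eprime_lt2: "\<not> 2 \<le> a \<Longrightarrow> eprime a (b # rest) = L (Suc (length rest)) 1 (eprime b rest)"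
  by (subst eprime.simps(2)) simp

lemma L_support: "L n k v \<gamma> \<noteq> 0 \<Longrightarrow> \<exists>\<beta>. \<gamma> = l k \<beta>"
proof (rule ccontr)
  assume h: "L n k v \<gamma> \<noteq> 0" and n: "\<nexists>\<beta>. \<gamma> = l k \<beta>"
  then have e: "{\<beta> \<in> D n. l k \<beta> = \<gamma>} = {}" by auto
  have "L n k v \<gamma> = 0" unfolding L_def by (simp only: e sum.empty)
  then show False using h by simp
qed

lemma eprime_support:
  "eprime b (c # r) \<gamma> \<noteq> 0 \<Longrightarrow> \<exists>k \<beta>. 1 \<le> k \<and> k \<le> max 1 b \<and> \<gamma> = l k \<beta>"
proof (induction b)
  case 0
  then have "L (Suc (length r)) 1 (eprime c r) \<gamma> \<noteq> 0" using eprime_lt2[of 0] by simp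
  then obtain \<beta> where "\<gamma> = l 1 \<beta>" using L_support by blast
  then show ?case by auto
next
  case (Suc b)
  show ?case
  proof (cases "2 \<le> Suc b")
    case True
    then have "L (Suc (length r)) (Suc b) (eprime c r) \<gamma> \<noteq> 0 \<or> eprime b (c # r) \<gamma> \<noteq> 0"
      using Suc.prems eprime_ge2[OF True] by auto
    then show ?thesis
    proof
      assume "L (Suc (length r)) (Suc b) (eprime c r) \<gamma> \<noteq> 0"
      then obtain \<beta> where "\<gamma> = l (Suc b) \<beta>" using L_support by blast
      then show ?thesis by (intro exI[of _ "Suc b"] exI[of _ \<beta>]) simp
    next
      assume "eprime b (c # r) \<gamma> \<noteq> 0"
      then obtain k \<beta> where "1 \<le> k" "k \<le> max 1 b" "\<gamma> = l k \<beta>" using Suc.IH by blast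
      then show ?thesis by (intro exI[of _ k] exI[of _ \<beta>]) simp
    qed
  next
    case False
    then have "L (Suc (length r)) 1 (eprime c r) \<gamma> \<noteq> 0" using Suc.prems eprime_lt2[OF False] by simp
    then obtain \<beta> where "\<gamma> = l 1 \<beta>" using L_support by blast
    then show ?thesis by auto
  qed
qed

lemma l_at: "l k \<beta> k = k + 1" unfolding l_def by simp

theorem mainTheorem11:
  fixes a :: nat and rest :: "nat list"
  assumes "restricted (Suc (length rest)) (a # rest)"
  shows "eprime a rest (diag (a # rest)) = 1"
  using assms
proof (induction rest arbitrary: a)
  case Nil
  then show ?case by (simp add: ev_def)
next
  case (Cons b r)
  define \<alpha> where "\<alpha> = diag (a # b # r)"
  define n where "n = Suc (length r)"
  have d: "\<alpha> \<in> D (Suc n)" "rseq (Suc n) \<alpha> = a # b # r"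
    using diag_eq[OF Cons.prems] \<alpha>_def n_def by auto
  define a' where "a' = (LEAST k. 1 \<le> k \<and> \<alpha> k = k + 1)"
  have r1: "rseq (Suc n) \<alpha> = a' # rseq n (remove_arc a' \<alpha>)" by (simp add: a'_def Let_def)
  have aL: "a = (LEAST k. 1 \<le> k \<and> \<alpha> k = k + 1)" and rr: "rseq n (remove_arc a \<alpha>) = b # r"
    using d(2) r1 unfolding a'_def[symmetric] by (metis list.inject)+
  have ha: "1 \<le> a \<and> \<alpha> a = a + 1" unfolding aL
    using short_arc_exists[OF d(1)] by (rule LeastI_ex)
  have amin: "\<not> (1 \<le> k \<and> \<alpha> k = k + 1)" if "k < a" for k
    using not_less_Least[of k "\<lambda>k. 1 \<le> k \<and> \<alpha> k = k + 1"] that aL by simp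
  have rD: "remove_arc a \<alpha> \<in> D n" using remove_arc_D[OF d(1)] ha by simp
  have rres: "restricted (Suc (length r)) (b # r)"
    unfolding restricted_def using rD rr n_def by auto
  have dbr: "diag (b # r) = remove_arc a \<alpha>"
    using diag_eq[OF rres] rD rr rseq_inj n_def by metis
  have IH: "eprime b r (remove_arc a \<alpha>) = 1" using Cons.IH[OF rres] dbr by simp
  have al: "\<alpha> = l a (remove_arc a \<alpha>)" using l_remove[OF d(1)] ha by simp
  have Lval: "L n a (eprime b r) \<alpha> = 1"
    using L_l[OF rD, of a "eprime b r"] al IH by simp
  show ?case
  proof (cases "2 \<le> a")
    case True
    have "eprime (a - 1) (b # r) \<alpha> = 0"
    proof (rule ccontr)
      assume "eprime (a - 1) (b # r) \<alpha> \<noteq> 0"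
      then obtain k \<beta> where "1 \<le> k" "k \<le> max 1 (a - 1)" "\<alpha> = l k \<beta>"
        using eprime_support by blast
      moreover have "k < a" using \<open>k \<le> max 1 (a - 1)\<close> True by simp
      ultimately show False using amin[of k] l_at[of k \<beta>] by simp
    qed
    then show ?thesis using eprime_ge2[OF True, of b r \<alpha>] Lval \<alpha>_def n_def by simp
  next
    case False
    then have "a = 1" using ha by simp
    then show ?thesis using eprime_lt2[OF False] Lval \<alpha>_def n_def by simp
  qed
qed

end
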